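(* Fix $K\ge 2$, $L\ge1$ and vectors $\mathbf a=(a_1,\dots,a_L),\mathbf b=(b_1,\dots,b_L)\in\mathbb{R}_+^L$, and let $u=\sum_\ell a_\ell$, $v=\sum_\ell b_\ell$. Consider the weighted stochastic block model with $K$ communities each of size $n$, where each pair of vertices independently receives a color in $\{0,1,\dots,L\}$ distributed as $p_n$ if both endpoints are in the same community and as $q_n$ otherwise, with \[ p_n(0)=1-\frac{u\log n}{n},\quad p_n(\ell)=\frac{a_\ell\log n}{n},\qquad q_n(0)=1-\frac{v\log n}{n},\quad q_n(\ell)=\frac{b_\ell\log n}{n}\quad(1\le\ell\le L). \] If \[ \sum_{\ell=1}^L\big(\sqrt{a_\ell}-\sqrt{b_\ell}\big)^2>1, \] then the maximum likelihood estimator recovers the communities exactly with probability converging to $1$ as $n\to\infty$. *)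

theory Defs
  imports Complex_Main "HOL-Library.FuncSet"
begin

text \<open>Vertices are 0..<K*n; vertex x lies in (true) community x div n.
  Colours are 0..L; a colouring assigns a colour to every unordered pair,
  represented as (x,y) with x < y.\<close>

definition wsbm_pairs :: "nat \<Rightarrow> (nat \<times> nat) set" where
  "wsbm_pairs N = {(x, y). x < y \<and> y < N}"

definition wsbm_colorings :: "nat \<Rightarrow> nat \<Rightarrow> ((nat \<times> nat) \<Rightarrow> nat) set" where
  "wsbm_colorings L N = wsbm_pairs N \<rightarrow>\<^sub>E {0..L}"

text \<open>Colour distribution: c = a gives p_n, c = b gives q_n.\<close>
definition wsbm_dist :: "nat \<Rightarrow> (nat \<Rightarrow> real) \<Rightarrow> nat \<Rightarrow> nat \<Rightarrow> real" where
  "wsbm_dist L c n l =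
     (if l = 0 then 1 - (\<Sum>j=1..L. c j) * ln (real n) / real n
      else c l * ln (real n) / real n)"

definition balanced_partition :: "nat \<Rightarrow> nat \<Rightarrow> (nat \<Rightarrow> nat) \<Rightarrow> bool" where
  "balanced_partition K n \<sigma> \<longleftrightarrow>
     (\<forall>x < K * n. \<sigma> x < K) \<and> (\<forall>k < K. card {x. x < K * n \<and> \<sigma> x = k} = n)"

definition true_partition :: "nat \<Rightarrow> nat \<Rightarrow> nat" where
  "true_partition n x = x div n"

definition same_partition :: "nat \<Rightarrow> (nat \<Rightarrow> nat) \<Rightarrow> (nat \<Rightarrow> nat) \<Rightarrow> bool" where
  "same_partition N \<sigma> \<tau> \<longleftrightarrow> (\<forall>x < N. \<forall>y < N. (\<sigma> x = \<sigma> y \<longleftrightarrow> \<tau> x = \<tau> y))"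

definition wsbm_likelihood ::
  "nat \<Rightarrow> nat \<Rightarrow> (nat \<Rightarrow> real) \<Rightarrow> (nat \<Rightarrow> real) \<Rightarrow> nat \<Rightarrow> (nat \<Rightarrow> nat)
     \<Rightarrow> ((nat \<times> nat) \<Rightarrow> nat) \<Rightarrow> real" where
  "wsbm_likelihood K L a b n \<sigma> G =
     (\<Prod>(x, y) \<in> wsbm_pairs (K * n).
        if \<sigma> x = \<sigma> y then wsbm_dist L a n (G (x, y)) else wsbm_dist L b n (G (x, y)))"

definition mle_exact_recovery ::
  "nat \<Rightarrow> nat \<Rightarrow> (nat \<Rightarrow> real) \<Rightarrow> (nat \<Rightarrow> real) \<Rightarrow> nat \<Rightarrow> ((nat \<times> nat) \<Rightarrow> nat) \<Rightarrow> bool" where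
  "mle_exact_recovery K L a b n G \<longleftrightarrow>
     (\<forall>\<sigma>. balanced_partition K n \<sigma> \<and> \<not> same_partition (K * n) \<sigma> (true_partition n) \<longrightarrow>
        wsbm_likelihood K L a b n \<sigma> G < wsbm_likelihood K L a b n (true_partition n) G)"

text \<open>Probability (under the model with the true communities) that the MLE succeeds.
  The probability of a colouring G is its likelihood under the true partition.\<close>
definition mle_success_prob ::
  "nat \<Rightarrow> nat \<Rightarrow> (nat \<Rightarrow> real) \<Rightarrow> (nat \<Rightarrow> real) \<Rightarrow> nat \<Rightarrow> real" where
  "mle_success_prob K L a b n =
     (\<Sum>G \<in> {G \<in> wsbm_colorings L (K * n). mle_exact_recovery K L a b n G}.
        wsbm_likelihood K L a b n (true_partition n) G)"

end

theory Submission
  imports Defs "HOL-Real_Asymp.Real_Asymp"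
begin

definition rho :: "nat \<Rightarrow> (nat\<Rightarrow>real) \<Rightarrow> (nat\<Rightarrow>real) \<Rightarrow> nat \<Rightarrow> real" where
  "rho L a b n = (\<Sum>c=0..L. sqrt (wsbm_dist L a n c * wsbm_dist L b n c))"

definition Dset :: "nat \<Rightarrow> nat \<Rightarrow> (nat\<Rightarrow>nat) \<Rightarrow> (nat\<times>nat) set" where
  "Dset K n \<sigma> = {e \<in> wsbm_pairs (K*n). (\<sigma> (fst e) = \<sigma> (snd e)) \<noteq> (fst e div n = snd e div n)}"

definition dd where
  "dd L a b n \<sigma> e = (if \<sigma> (fst e) = \<sigma> (snd e) then wsbm_dist L a n else wsbm_dist L b n)"

definition dnn where
  "dnn L a b n \<longleftrightarrow> (\<forall>c\<le>L. 0 \<le> wsbm_dist L a n c \<and> 0 \<le> wsbm_dist L b n c)"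

lemma finite_pairs: "finite (wsbm_pairs N)"
  unfolding wsbm_pairs_def by (rule finite_subset[of _ "{..<N} \<times> {..<N}"]) auto

lemma finite_colorings: "finite (wsbm_colorings L N)"
  unfolding wsbm_colorings_def by (intro finite_PiE finite_pairs) auto

lemma dist_sum: "(\<Sum>l=0..L. wsbm_dist L c n l) = 1"
proof -
  have "(\<Sum>l=0..L. wsbm_dist L c n l) = wsbm_dist L c n 0 + (\<Sum>l=Suc 0..L. wsbm_dist L c n l)"
    by (rule sum.atLeast_Suc_atMost) simp
  also have "(\<Sum>l=Suc 0..L. wsbm_dist L c n l) = (\<Sum>l=1..L. c l * ln (real n) / real n)"
    by (rule sum.cong) (auto simp: wsbm_dist_def)
  also have "\<dots> = (\<Sum>l=1..L. c l) * ln (real n) / real n"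
    by (simp add: sum_divide_distrib[symmetric] sum_distrib_right[symmetric])
  finally show ?thesis by (simp add: wsbm_dist_def)
qed

lemma sqrt_prod: "sqrt (prod f A) = prod (\<lambda>x. sqrt (f x)) A"
  by (induction A rule: infinite_finite_induct) (auto simp: real_sqrt_mult)

lemma lik_eq: "wsbm_likelihood K L a b n \<sigma> G = (\<Prod>e\<in>wsbm_pairs (K*n). dd L a b n \<sigma> e (G e))"
  unfolding wsbm_likelihood_def dd_def by (rule prod.cong) (auto simp: split_beta)

lemma sum_prod_col: fixes f :: "nat \<times> nat \<Rightarrow> nat \<Rightarrow> real" shows "(\<Sum>G\<in>wsbm_colorings L N. \<Prod>e\<in>wsbm_pairs N. f e (G e)) = (\<Prod>e\<in>wsbm_pairs N. \<Sum>c=0..L. f e c)"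
  unfolding wsbm_colorings_def using prod_sum_PiE[of "wsbm_pairs N" "\<lambda>_. {0..L}" f] by (simp add: finite_pairs)

lemma lik_nonneg:
  assumes "dnn L a b n" "G \<in> wsbm_colorings L (K*n)"
  shows "0 \<le> wsbm_likelihood K L a b n \<sigma> G"
  unfolding lik_eq
proof (rule prod_nonneg)
  fix e assume "e \<in> wsbm_pairs (K*n)"
  then have "G e \<le> L" using assms(2) unfolding wsbm_colorings_def by auto
  then show "0 \<le> dd L a b n \<sigma> e (G e)" using assms(1) by (auto simp: dd_def dnn_def)
qed

lemma lik_sum1:
  "(\<Sum>G\<in>wsbm_colorings L (K*n). wsbm_likelihood K L a b n \<sigma> G) = 1"
  unfolding lik_eq sum_prod_col by (intro prod.neutral ballI) (simp add: dd_def dist_sum)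

lemma Dset_sub: "Dset K n \<sigma> \<subseteq> wsbm_pairs (K*n)"
  unfolding Dset_def by auto

lemma pair_term:
  assumes "dnn L a b n" "e \<in> wsbm_pairs (K*n)"
  shows "(\<Sum>c=0..L. sqrt (dd L a b n (true_partition n) e c * dd L a b n \<sigma> e c))
     = (if e \<in> Dset K n \<sigma> then rho L a b n else 1)"
proof (cases "e \<in> Dset K n \<sigma>")
  case True
  then show ?thesis using assms
    by (auto simp: Dset_def dd_def rho_def true_partition_def mult.commute)
next
  case False
  then have eq: "dd L a b n (true_partition n) e = dd L a b n \<sigma> e"
    using assms(2) by (auto simp: Dset_def dd_def true_partition_def)
  have "(\<Sum>c=0..L. sqrt (dd L a b n \<sigma> e c * dd L a b n \<sigma> e c)) = (\<Sum>c=0..L. dd L a b n \<sigma> e c)"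
    by (rule sum.cong) (use assms(1) in \<open>auto simp: dd_def dnn_def\<close>)
  also have "\<dots> = 1" by (simp add: dd_def dist_sum)
  finally show ?thesis using False eq by simp
qed

lemma keybound:
  assumes dn: "dnn L a b n"
  shows "(\<Sum>G\<in>{G\<in>wsbm_colorings L (K*n). wsbm_likelihood K L a b n (true_partition n) G \<le> wsbm_likelihood K L a b n \<sigma> G}.
            wsbm_likelihood K L a b n (true_partition n) G) \<le> rho L a b n ^ card (Dset K n \<sigma>)"
proof -
  let ?C = "wsbm_colorings L (K*n)"
  let ?L0 = "wsbm_likelihood K L a b n (true_partition n)"
  let ?Ls = "wsbm_likelihood K L a b n \<sigma>"
  have nn: "G \<in> ?C \<Longrightarrow> 0 \<le> ?L0 G \<and> 0 \<le> ?Ls G" for G using lik_nonneg[OF dn] by blast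
  have "(\<Sum>G\<in>{G\<in>?C. ?L0 G \<le> ?Ls G}. ?L0 G) \<le> (\<Sum>G\<in>{G\<in>?C. ?L0 G \<le> ?Ls G}. sqrt (?L0 G * ?Ls G))"
  proof (rule sum_mono)
    fix G assume G: "G \<in> {G\<in>?C. ?L0 G \<le> ?Ls G}"
    then have "?L0 G = sqrt (?L0 G * ?L0 G)" using nn by simp
    also have "\<dots> \<le> sqrt (?L0 G * ?Ls G)" using G nn by (intro real_sqrt_le_mono mult_left_mono) auto
    finally show "?L0 G \<le> sqrt (?L0 G * ?Ls G)" .
  qed
  also have "\<dots> \<le> (\<Sum>G\<in>?C. sqrt (?L0 G * ?Ls G))"
    by (rule sum_mono2) (use nn finite_colorings in auto)
  also have "\<dots> = (\<Sum>G\<in>?C. \<Prod>e\<in>wsbm_pairs (K*n). sqrt (dd L a b n (true_partition n) e (G e) * dd L a b n \<sigma> e (G e)))"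
    by (simp add: lik_eq prod.distrib[symmetric] sqrt_prod)
  also have "\<dots> = (\<Prod>e\<in>wsbm_pairs (K*n). \<Sum>c=0..L. sqrt (dd L a b n (true_partition n) e c * dd L a b n \<sigma> e c))"
    by (rule sum_prod_col)
  also have "\<dots> = (\<Prod>e\<in>wsbm_pairs (K*n). if e \<in> Dset K n \<sigma> then rho L a b n else 1)"
    by (rule prod.cong) (auto simp: pair_term[OF dn])
  also have "\<dots> = rho L a b n ^ card (Dset K n \<sigma>)"
    using Dset_sub[of K n \<sigma>] by (simp add: prod.If_cases finite_pairs Int_absorb1 Int_commute)
  finally show ?thesis .
qed

definition Nc where "Nc K n \<sigma> i j = card {x. x < K*n \<and> x div n = i \<and> \<sigma> x = j}"

lemma block_eq:
  fixes n K i :: nat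
  assumes "0 < n" "i < K"
  shows "{x. x < K*n \<and> x div n = i} = {i*n..<i*n+n}"
proof (intro equalityI subsetI)
  fix x assume "x \<in> {x. x < K*n \<and> x div n = i}"
  then show "x \<in> {i*n..<i*n+n}"
    using div_times_less_eq_dividend[of x n] dividend_less_div_times[OF assms(1), of x] by auto
next
  fix x assume x: "x \<in> {i*n..<i*n+n}"
  have "i*n + n \<le> K*n" using assms(2) by (metis Suc_leI add.commute mult_Suc mult_le_mono1)
  moreover have "x div n = i" using x by (intro div_nat_eqI) (auto simp: mult.commute)
  ultimately show "x \<in> {x. x < K*n \<and> x div n = i}" using x by auto
qed

lemma card_block: fixes n K i :: nat shows "0 < n \<Longrightarrow> i < K \<Longrightarrow> card {x. x < K*n \<and> x div n = i} = n"
  by (simp add: block_eq)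

lemma card_fib:
  assumes "0 < n" "i < K"
  shows "card {y. y < K*n \<and> y div n = i \<and> \<sigma> y \<noteq> j} + Nc K n \<sigma> i j = n"
proof -
  have "{x. x < K*n \<and> x div n = i} = {y. y < K*n \<and> y div n = i \<and> \<sigma> y \<noteq> j} \<union> {x. x < K*n \<and> x div n = i \<and> \<sigma> x = j}"
    by auto
  then have "n = card ({y. y < K*n \<and> y div n = i \<and> \<sigma> y \<noteq> j} \<union> {x. x < K*n \<and> x div n = i \<and> \<sigma> x = j})"
    using card_block[OF assms] by simp
  also have "\<dots> = card {y. y < K*n \<and> y div n = i \<and> \<sigma> y \<noteq> j} + Nc K n \<sigma> i j"
    unfolding Nc_def by (rule card_Un_disjoint) auto
  finally show ?thesis by simp
qed

lemma regime2:
  fixes \<epsilon> :: real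
  assumes n: "0 < n" and i: "i < K" and sig: "\<forall>x<K*n. \<sigma> x < K"
    and small: "\<forall>j<K. real (Nc K n \<sigma> i j) < (1-\<epsilon>) * n"
  shows "\<epsilon> * n * n \<le> 2 * real (card (Dset K n \<sigma>))"
proof -
  define B where "B = {x. x < K*n \<and> x div n = i}"
  define fib where "fib x = {y. y < K*n \<and> y div n = i \<and> \<sigma> y \<noteq> \<sigma> x}" for x
  define Op where "Op = Sigma B fib"
  define Ol where "Ol = {p\<in>Op. fst p < snd p}"
  have cB: "card B = n" unfolding B_def using card_block[OF n i] .
  have fB: "finite B" unfolding B_def by simp
  have ffib: "finite (fib x)" for x unfolding fib_def by simp
  have cf: "\<epsilon> * n \<le> real (card (fib x))" if "x \<in> B" for x
  proof -
    have "\<sigma> x < K" using that sig B_def by auto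
    then have "real (Nc K n \<sigma> i (\<sigma> x)) < (1-\<epsilon>) * n" using small by auto
    moreover have "real (card (fib x)) + real (Nc K n \<sigma> i (\<sigma> x)) = n"
      using card_fib[OF n i, of \<sigma> "\<sigma> x"] unfolding fib_def by (metis of_nat_add)
    ultimately show ?thesis by (simp add: algebra_simps)
  qed
  have "real (card Op) = (\<Sum>x\<in>B. real (card (fib x)))"
    unfolding Op_def using fB ffib by (simp add: card_SigmaI)
  also have "\<dots> \<ge> (\<Sum>x\<in>B. \<epsilon> * n)" by (rule sum_mono) (use cf in auto)
  finally have c1: "\<epsilon> * n * n \<le> real (card Op)" using cB by (simp add: mult.commute)
  have "Op \<subseteq> Ol \<union> prod.swap ` Ol"
  proof
    fix p assume p: "p \<in> Op"
    obtain x y where xy: "p = (x,y)" by (cases p)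
    have "x \<noteq> y" using p xy by (auto simp: Op_def fib_def)
    show "p \<in> Ol \<union> prod.swap ` Ol"
    proof (cases "x < y")
      case True then show ?thesis using p xy by (auto simp: Ol_def)
    next
      case False
      then have "(y,x) \<in> Ol" using p xy \<open>x \<noteq> y\<close> by (auto simp: Ol_def Op_def B_def fib_def)
      then show ?thesis using xy by (auto intro!: image_eqI[where x="(y,x)"])
    qed
  qed
  moreover have fOl: "finite Ol" unfolding Ol_def Op_def using fB ffib by auto
  ultimately have "card Op \<le> card (Ol \<union> prod.swap ` Ol)" by (intro card_mono) auto
  also have "\<dots> \<le> card Ol + card (prod.swap ` Ol)" by (rule card_Un_le)
  also have "\<dots> \<le> 2 * card Ol" using card_image_le[OF fOl, of prod.swap] by simp
  also have "card Ol \<le> card (Dset K n \<sigma>)"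
  proof (rule card_mono)
    show "finite (Dset K n \<sigma>)" using Dset_sub finite_pairs by (rule finite_subset)
    show "Ol \<subseteq> Dset K n \<sigma>" by (auto simp: Ol_def Op_def B_def fib_def Dset_def wsbm_pairs_def)
  qed
  finally have "card Op \<le> 2 * card (Dset K n \<sigma>)" by simp
  then show ?thesis using c1 by (metis (mono_tags, opaque_lifting) le_trans of_nat_le_iff of_nat_mult of_nat_numeral order.trans)
qed

lemma div_lt: "x < K*n \<Longrightarrow> x div n < (K::nat)"
  by (rule less_mult_imp_div_less)

lemma regime1_inj:
  fixes \<epsilon> :: real
  assumes n: "0 < n" and eps: "\<epsilon> < 1/2" and bal: "balanced_partition K n \<sigma>"
    and pi: "\<forall>i<K. \<pi> i < K"
    and big: "\<forall>i<K. (1-\<epsilon>) * n \<le> real (Nc K n \<sigma> i (\<pi> i))"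
  shows "inj_on \<pi> {..<K}"
proof (rule inj_onI, rule ccontr)
  fix i i' assume i: "i \<in> {..<K}" and i': "i' \<in> {..<K}" and eq: "\<pi> i = \<pi> i'" and ne: "i \<noteq> i'"
  define j where "j = \<pi> i"
  have j: "j < K" using pi i j_def by auto
  let ?A = "{x. x < K*n \<and> x div n = i \<and> \<sigma> x = j}"
  let ?A' = "{x. x < K*n \<and> x div n = i' \<and> \<sigma> x = j}"
  have "card (?A \<union> ?A') \<le> card {x. x < K*n \<and> \<sigma> x = j}" by (rule card_mono) auto
  also have "\<dots> = n" using bal j unfolding balanced_partition_def by auto
  also have "card (?A \<union> ?A') = card ?A + card ?A'" using ne by (intro card_Un_disjoint) auto
  finally have "Nc K n \<sigma> i (\<pi> i) + Nc K n \<sigma> i' (\<pi> i') \<le> n"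
    unfolding Nc_def j_def using eq by simp
  then have "real (Nc K n \<sigma> i (\<pi> i)) + real (Nc K n \<sigma> i' (\<pi> i')) \<le> n"
    by (metis of_nat_add of_nat_mono)
  moreover have "(1-\<epsilon>) * n \<le> real (Nc K n \<sigma> i (\<pi> i))" "(1-\<epsilon>) * n \<le> real (Nc K n \<sigma> i' (\<pi> i'))"
    using big i i' by auto
  ultimately have "(1 - 2*\<epsilon>) * real n \<le> 0" by (simp add: algebra_simps)
  moreover have "0 < (1 - 2*\<epsilon>) * real n" using eps n by simp
  ultimately show False by simp
qed

lemma regime1_same:
  assumes inj: "inj_on \<pi> {..<K}" and all: "\<forall>x<K*n. \<sigma> x = \<pi> (x div n)"
  shows "same_partition (K*n) \<sigma> (true_partition n)"
  unfolding same_partition_def true_partition_def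
proof (intro allI impI)
  fix x y assume x: "x < K*n" and y: "y < K*n"
  have "x div n < K" "y div n < K" using x y div_lt by auto
  then show "(\<sigma> x = \<sigma> y) = (x div n = y div n)" using all x y inj by (auto dest: inj_onD)
qed

lemma minmax_cases: "min x y = min x' y' \<Longrightarrow> max x y = max x' y' \<Longrightarrow> (x = x' \<and> y = y') \<or> (x = y' \<and> y = (x'::nat))"
  by (auto simp: min_def max_def split: if_splits)

lemma regime1_bound:
  fixes \<epsilon> :: real
  assumes n: "0 < n" and bal: "balanced_partition K n \<sigma>"
    and pi: "\<forall>i<K. \<pi> i < K"
    and big: "\<forall>i<K. (1-\<epsilon>) * n \<le> real (Nc K n \<sigma> i (\<pi> i))"
    and inj: "inj_on \<pi> {..<K}"
  shows "2*(1-\<epsilon>)*n * card {x. x < K*n \<and> \<sigma> x \<noteq> \<pi> (x div n)} \<le> card (Dset K n \<sigma>)"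
proof -
  define S where "S = {x. x < K*n \<and> \<sigma> x \<noteq> \<pi> (x div n)}"
  define fib where "fib x = {y. y < K*n \<and> y \<notin> S \<and> (\<sigma> x = \<sigma> y) \<noteq> (x div n = y div n)}" for x
  define P where "P = Sigma S fib"
  have surj: "\<pi> ` {..<K} = {..<K}" by (rule endo_inj_surj) (use pi inj in auto)
  have fS: "finite S" unfolding S_def by simp
  have ffib: "finite (fib x)" for x unfolding fib_def by simp
  have cf: "2*(1-\<epsilon>)*n \<le> real (card (fib x))" if x: "x \<in> S" for x
  proof -
    define i where "i = x div n"
    have xK: "x < K*n" using x unfolding S_def by simp
    have i: "i < K" unfolding i_def by (rule div_lt[OF xK])
    have "\<sigma> x < K" using x bal unfolding S_def balanced_partition_def by auto
    then have "\<sigma> x \<in> \<pi> ` {..<K}" using surj by simp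
    then obtain i' where i': "i' < K" "\<pi> i' = \<sigma> x" by force
    have ne: "i \<noteq> i'" using x i' unfolding S_def i_def by force
    let ?A1 = "{y. y < K*n \<and> y div n = i \<and> \<sigma> y = \<pi> i}"
    let ?A2 = "{y. y < K*n \<and> y div n = i' \<and> \<sigma> y = \<pi> i'}"
    have sx: "\<sigma> x \<noteq> \<pi> i" using x unfolding S_def i_def by simp
    have sub: "?A1 \<union> ?A2 \<subseteq> fib x"
    proof
      fix y assume y: "y \<in> ?A1 \<union> ?A2"
      then have yS: "y \<notin> S" unfolding S_def by auto
      from y have "(\<sigma> x = \<sigma> y) \<noteq> (x div n = y div n)"
      proof
        assume "y \<in> ?A1" then show ?thesis using sx unfolding i_def by auto
      next
        assume "y \<in> ?A2" then show ?thesis using i' ne unfolding i_def by auto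
      qed
      then show "y \<in> fib x" using y yS unfolding fib_def by auto
    qed
    have "card ?A1 + card ?A2 = card (?A1 \<union> ?A2)" using ne by (intro card_Un_disjoint[symmetric]) auto
    also have "\<dots> \<le> card (fib x)" using sub ffib by (rule card_mono[rotated])
    finally have "Nc K n \<sigma> i (\<pi> i) + Nc K n \<sigma> i' (\<pi> i') \<le> card (fib x)"
      unfolding Nc_def .
    then have "real (Nc K n \<sigma> i (\<pi> i)) + real (Nc K n \<sigma> i' (\<pi> i')) \<le> real (card (fib x))"
      by (metis of_nat_add of_nat_mono)
    moreover have "(1-\<epsilon>) * n \<le> real (Nc K n \<sigma> i (\<pi> i))" "(1-\<epsilon>) * n \<le> real (Nc K n \<sigma> i' (\<pi> i'))"
      using big i i'(1) by auto
    ultimately show ?thesis by linarith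
  qed
  have "real (card P) = (\<Sum>x\<in>S. real (card (fib x)))"
    unfolding P_def using fS ffib by (simp add: card_SigmaI)
  also have "\<dots> \<ge> (\<Sum>x\<in>S. 2*(1-\<epsilon>)*n)" by (rule sum_mono) (use cf in auto)
  finally have c1: "2*(1-\<epsilon>)*n * card S \<le> real (card P)" by (simp add: mult.commute)
  define f where "f p = (min (fst p) (snd p), max (fst p) (snd p))" for p :: "nat \<times> nat"
  have "inj_on f P"
  proof (rule inj_onI)
    fix p q assume p: "p \<in> P" and q: "q \<in> P" and eq: "f p = f q"
    obtain x y x' y' where pq: "p = (x,y)" "q = (x',y')" by (cases p, cases q) auto
    have "min x y = min x' y'" "max x y = max x' y'" using eq pq by (auto simp: f_def)
    then have "(x = x' \<and> y = y') \<or> (x = y' \<and> y = x')" by (rule minmax_cases)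
    moreover have "x \<in> S" "y \<notin> S" "x' \<in> S" "y' \<notin> S" using p q pq unfolding P_def fib_def by auto
    ultimately show "p = q" using pq by auto
  qed
  moreover have "f ` P \<subseteq> Dset K n \<sigma>"
  proof
    fix e assume "e \<in> f ` P"
    then obtain x y where xy: "(x,y) \<in> P" "e = f (x,y)" by auto
    then have "x \<noteq> y" "x < K*n" "y < K*n" "(\<sigma> x = \<sigma> y) \<noteq> (x div n = y div n)"
      unfolding P_def fib_def S_def by auto
    then show "e \<in> Dset K n \<sigma>" using xy(2)
      by (auto simp: f_def Dset_def wsbm_pairs_def min_def max_def)
  qed
  moreover have "finite (Dset K n \<sigma>)" using Dset_sub finite_pairs by (rule finite_subset)
  ultimately have "card P \<le> card (Dset K n \<sigma>)" by (rule card_inj_on_le)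
  then have "real (card P) \<le> real (card (Dset K n \<sigma>))" by simp
  then show ?thesis using c1 unfolding S_def by linarith
qed

definition Fset where
  "Fset K n = {\<sigma> \<in> {..<K*n} \<rightarrow>\<^sub>E {..<K}. balanced_partition K n \<sigma> \<and> \<not> same_partition (K*n) \<sigma> (true_partition n)}"

lemma finite_Fset: "finite (Fset K n)"
  unfolding Fset_def by (rule finite_subset[of _ "{..<K*n} \<rightarrow>\<^sub>E {..<K}"]) (auto intro!: finite_PiE)

lemma restrict_props:
  assumes bal: "balanced_partition K n \<sigma>" and ns: "\<not> same_partition (K*n) \<sigma> (true_partition n)"
  shows "restrict \<sigma> {..<K*n} \<in> Fset K n"
    and "wsbm_likelihood K L a b n (restrict \<sigma> {..<K*n}) G = wsbm_likelihood K L a b n \<sigma> G"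
proof -
  let ?s = "restrict \<sigma> {..<K*n}"
  have "?s \<in> {..<K*n} \<rightarrow>\<^sub>E {..<K}" using bal unfolding balanced_partition_def by auto
  moreover have "{x. x < K*n \<and> ?s x = k} = {x. x < K*n \<and> \<sigma> x = k}" for k by auto
  then have "balanced_partition K n ?s" using bal unfolding balanced_partition_def by auto
  moreover have "same_partition (K*n) ?s (true_partition n) = same_partition (K*n) \<sigma> (true_partition n)"
    unfolding same_partition_def by auto
  ultimately show "?s \<in> Fset K n" using ns unfolding Fset_def by auto
  show "wsbm_likelihood K L a b n ?s G = wsbm_likelihood K L a b n \<sigma> G"
    unfolding wsbm_likelihood_def by (rule prod.cong) (auto simp: wsbm_pairs_def)
qed

lemma success_eq:
  "mle_success_prob K L a b n = 1 - (\<Sum>G\<in>{G\<in>wsbm_colorings L (K*n). \<not> mle_exact_recovery K L a b n G}.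
      wsbm_likelihood K L a b n (true_partition n) G)"
proof -
  let ?C = "wsbm_colorings L (K*n)"
  let ?f = "wsbm_likelihood K L a b n (true_partition n)"
  let ?P = "mle_exact_recovery K L a b n"
  have "?C = {G\<in>?C. ?P G} \<union> {G\<in>?C. \<not> ?P G}" by auto
  then have "(\<Sum>G\<in>?C. ?f G) = (\<Sum>G\<in>{G\<in>?C. ?P G}. ?f G) + (\<Sum>G\<in>{G\<in>?C. \<not> ?P G}. ?f G)"
    using finite_colorings by (metis (no_types, lifting) sum.union_disjoint disjoint_iff finite_Un mem_Collect_eq)
  then show ?thesis using lik_sum1 unfolding mle_success_prob_def by simp
qed

lemma union_bound:
  assumes dn: "dnn L a b n"
  shows "(\<Sum>G\<in>{G\<in>wsbm_colorings L (K*n). \<not> mle_exact_recovery K L a b n G}.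
      wsbm_likelihood K L a b n (true_partition n) G)
    \<le> (\<Sum>\<sigma>\<in>Fset K n. \<Sum>G\<in>{G\<in>wsbm_colorings L (K*n). wsbm_likelihood K L a b n (true_partition n) G \<le> wsbm_likelihood K L a b n \<sigma> G}.
            wsbm_likelihood K L a b n (true_partition n) G)"
proof -
  let ?C = "wsbm_colorings L (K*n)"
  let ?L0 = "wsbm_likelihood K L a b n (true_partition n)"
  let ?T = "\<lambda>G \<sigma>. if ?L0 G \<le> wsbm_likelihood K L a b n \<sigma> G then ?L0 G else 0"
  have nn: "G \<in> ?C \<Longrightarrow> 0 \<le> ?L0 G" for G using lik_nonneg[OF dn] by blast
  have "(\<Sum>G\<in>{G\<in>?C. \<not> mle_exact_recovery K L a b n G}. ?L0 G) \<le> (\<Sum>G\<in>{G\<in>?C. \<not> mle_exact_recovery K L a b n G}. \<Sum>\<sigma>\<in>Fset K n. ?T G \<sigma>)"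
  proof (rule sum_mono)
    fix G assume G: "G \<in> {G\<in>?C. \<not> mle_exact_recovery K L a b n G}"
    then obtain \<sigma> where s: "balanced_partition K n \<sigma>" "\<not> same_partition (K*n) \<sigma> (true_partition n)"
      "\<not> wsbm_likelihood K L a b n \<sigma> G < ?L0 G"
      unfolding mle_exact_recovery_def by auto
    let ?s = "restrict \<sigma> {..<K*n}"
    have sF: "?s \<in> Fset K n" and eq: "wsbm_likelihood K L a b n ?s G = wsbm_likelihood K L a b n \<sigma> G"
      using restrict_props[OF s(1,2)] by auto
    have "?L0 G = ?T G ?s" using s(3) eq by simp
    also have "\<dots> \<le> (\<Sum>\<sigma>\<in>Fset K n. ?T G \<sigma>)"
      by (intro member_le_sum[OF sF]) (use nn G finite_Fset in auto)
    finally show "?L0 G \<le> (\<Sum>\<sigma>\<in>Fset K n. ?T G \<sigma>)" .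
  qed
  also have "\<dots> \<le> (\<Sum>G\<in>?C. \<Sum>\<sigma>\<in>Fset K n. ?T G \<sigma>)"
    by (rule sum_mono2) (use finite_colorings nn in \<open>auto intro!: sum_nonneg\<close>)
  also have "\<dots> = (\<Sum>\<sigma>\<in>Fset K n. \<Sum>G\<in>?C. ?T G \<sigma>)" by (rule sum.swap)
  also have "\<dots> = (\<Sum>\<sigma>\<in>Fset K n. \<Sum>G\<in>{G\<in>?C. ?L0 G \<le> wsbm_likelihood K L a b n \<sigma> G}. ?L0 G)"
    by (rule sum.cong) (auto simp: sum.inter_filter finite_colorings)
  finally show ?thesis .
qed

lemma rho_le:
  fixes a b :: "nat \<Rightarrow> real" and n :: nat
  assumes nn: "\<forall>l\<in>{1..L}. a l \<ge> 0 \<and> b l \<ge> 0" and n: "1 \<le> n"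
    and hu: "(\<Sum>l=1..L. a l) * (ln n / n) \<le> 1" and hv: "(\<Sum>l=1..L. b l) * (ln n / n) \<le> 1"
  shows "rho L a b n \<le> 1 - (ln n / n) * (\<Sum>l=1..L. (sqrt (a l) - sqrt (b l))^2) / 2"
    and "0 \<le> rho L a b n"
proof -
  define t where "t = ln (real n) / real n"
  define u where "u = (\<Sum>l=1..L. a l)"
  define v where "v = (\<Sum>l=1..L. b l)"
  define S where "S = (\<Sum>l=1..L. sqrt (a l) * sqrt (b l))"
  have t0: "0 \<le> t" unfolding t_def using n by simp
  have ut: "u * t \<le> 1" "v * t \<le> 1" using hu hv unfolding u_def v_def t_def by auto
  have d0: "wsbm_dist L a n 0 = 1 - u*t" "wsbm_dist L b n 0 = 1 - v*t"
    unfolding wsbm_dist_def u_def v_def t_def by simp_all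
  have dl: "l \<noteq> 0 \<Longrightarrow> wsbm_dist L a n l = a l * t \<and> wsbm_dist L b n l = b l * t" for l
    unfolding wsbm_dist_def t_def by simp
  have "rho L a b n = sqrt (wsbm_dist L a n 0 * wsbm_dist L b n 0) + (\<Sum>l=Suc 0..L. sqrt (wsbm_dist L a n l * wsbm_dist L b n l))"
    unfolding rho_def by (rule sum.atLeast_Suc_atMost) simp
  also have "(\<Sum>l=Suc 0..L. sqrt (wsbm_dist L a n l * wsbm_dist L b n l)) = t * S"
  proof -
    have "sqrt (wsbm_dist L a n l * wsbm_dist L b n l) = t * (sqrt (a l) * sqrt (b l))" if l: "l \<in> {Suc 0..L}" for l
    proof -
      have "wsbm_dist L a n l * wsbm_dist L b n l = (t*t) * (a l * b l)" using dl[of l] l by (simp add: algebra_simps)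
      then show ?thesis using t0 by (simp add: real_sqrt_mult)
    qed
    then have "(\<Sum>l=Suc 0..L. sqrt (wsbm_dist L a n l * wsbm_dist L b n l)) = (\<Sum>l=Suc 0..L. t * (sqrt (a l) * sqrt (b l)))"
      by (rule sum.cong[OF refl])
    then show ?thesis unfolding S_def by (simp add: sum_distrib_left)
  qed
  finally have rho_eq: "rho L a b n = sqrt ((1 - u*t) * (1 - v*t)) + t * S" using d0 by simp
  have "sqrt ((1 - u*t) * (1 - v*t)) \<le> ((1 - u*t) + (1 - v*t))/2"
    by (rule arith_geo_mean_sqrt) (use ut in auto)
  moreover have "(\<Sum>l=1..L. (sqrt (a l) - sqrt (b l))^2) = u + v - 2*S"
  proof -
    have "(\<Sum>l=1..L. (sqrt (a l) - sqrt (b l))^2) = (\<Sum>l=1..L. a l + b l - 2 * (sqrt (a l) * sqrt (b l)))"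
      by (rule sum.cong) (use nn in \<open>auto simp: power2_diff\<close>)
    also have "\<dots> = u + v - 2*S" unfolding u_def v_def S_def
      by (simp add: sum.distrib sum_subtractf sum_distrib_left)
    finally show ?thesis .
  qed
  ultimately show "rho L a b n \<le> 1 - (ln n / n) * (\<Sum>l=1..L. (sqrt (a l) - sqrt (b l))^2) / 2"
  proof -
    assume h1: "sqrt ((1 - u*t) * (1 - v*t)) \<le> ((1 - u*t) + (1 - v*t))/2"
      and h2: "(\<Sum>l=1..L. (sqrt (a l) - sqrt (b l))^2) = u + v - 2*S"
    have e: "(ln n / n) * (\<Sum>l=1..L. (sqrt (a l) - sqrt (b l))^2) / 2 = (u*t)/2 + (v*t)/2 - t*S"
      unfolding h2 t_def[symmetric] by (simp add: field_simps)
    show ?thesis unfolding e rho_eq using h1 by (simp add: algebra_simps)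
  qed
  have "0 \<le> S" unfolding S_def by (rule sum_nonneg) (use nn in auto)
  then show "0 \<le> rho L a b n" using rho_eq t0 ut by (simp add: mult_nonneg_nonneg)
qed

definition sigpi :: "nat \<Rightarrow> nat \<Rightarrow> (nat\<Rightarrow>nat) \<Rightarrow> nat \<Rightarrow> nat" where "sigpi K n \<pi> = restrict (\<lambda>x. \<pi> (x div n)) {..<K*n}"
definition gg :: "nat \<Rightarrow> nat \<Rightarrow> real \<Rightarrow> (nat\<Rightarrow>nat) \<Rightarrow> (nat\<Rightarrow>nat) \<Rightarrow> real" where "gg K n w \<sigma> \<pi> = (\<Prod>x\<in>{..<K*n}. if \<sigma> x \<noteq> \<pi> (x div n) then w else (1::real))"
definition hh :: "nat \<Rightarrow> nat \<Rightarrow> real \<Rightarrow> (nat\<Rightarrow>nat) \<Rightarrow> (nat\<Rightarrow>nat) \<Rightarrow> real" where "hh K n w \<sigma> \<pi> = (if \<sigma> = sigpi K n \<pi> then 0 else gg K n w \<sigma> \<pi>)"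
definition Pis :: "nat \<Rightarrow> (nat\<Rightarrow>nat) set" where "Pis K = {..<K} \<rightarrow>\<^sub>E {..<K}"

lemma gg_card: "gg K n w \<sigma> \<pi> = w ^ card {x. x < K*n \<and> \<sigma> x \<noteq> \<pi> (x div n)}"
proof -
  have "gg K n w \<sigma> \<pi> = (\<Prod>x\<in>{..<K*n} \<inter> {x. \<sigma> x \<noteq> \<pi> (x div n)}. w) * (\<Prod>x\<in>{..<K*n} \<inter> - {x. \<sigma> x \<noteq> \<pi> (x div n)}. 1)"
    unfolding gg_def by (rule prod.If_cases) simp
  also have "{..<K*n} \<inter> {x. \<sigma> x \<noteq> \<pi> (x div n)} = {x. x < K*n \<and> \<sigma> x \<noteq> \<pi> (x div n)}" by auto
  finally show ?thesis by simp
qed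

lemma gg_nonneg: "0 \<le> w \<Longrightarrow> 0 \<le> gg K n w \<sigma> \<pi>"
  unfolding gg_card by simp

lemma hh_nonneg: "0 \<le> w \<Longrightarrow> 0 \<le> hh K n w \<sigma> \<pi>"
  unfolding hh_def using gg_nonneg by simp

lemma sum_hh:
  assumes pi: "\<pi> \<in> Pis K"
  shows "(\<Sum>\<sigma>\<in>{..<K*n} \<rightarrow>\<^sub>E {..<K}. hh K n w \<sigma> \<pi>) = (1 + (real K - 1) * w) ^ (K*n) - 1"
proof -
  let ?E = "{..<K*n} \<rightarrow>\<^sub>E {..<K}"
  have pik: "x < K*n \<Longrightarrow> \<pi> (x div n) < K" for x using pi div_lt[of x K n] unfolding Pis_def by auto
  have spE: "sigpi K n \<pi> \<in> ?E" unfolding sigpi_def using pik by auto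
  have g1: "gg K n w (sigpi K n \<pi>) \<pi> = 1" unfolding gg_def sigpi_def by (rule prod.neutral) auto
  have inner: "(\<Sum>j<K. if j \<noteq> p then w else 1) = 1 + (real K - 1) * w" if p: "p < K" for p
  proof -
    have "(\<Sum>j<K. if j \<noteq> p then w else 1) = (\<Sum>j<K. w + (if j = p then 1 - w else 0))"
      by (rule sum.cong) auto
    also have "\<dots> = real K * w + (1 - w)" using p by (simp add: sum.distrib)
    finally show ?thesis by (simp add: algebra_simps)
  qed
  have "(\<Sum>\<sigma>\<in>?E. gg K n w \<sigma> \<pi>) = (\<Prod>x\<in>{..<K*n}. \<Sum>j<K. if j \<noteq> \<pi> (x div n) then w else 1)"
    unfolding gg_def using prod_sum_PiE[of "{..<K*n}" "\<lambda>_. {..<K}" "\<lambda>x j. if j \<noteq> \<pi> (x div n) then w else 1"]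
    by simp
  also have "\<dots> = (\<Prod>x\<in>{..<K*n}. 1 + (real K - 1) * w)"
    by (rule prod.cong) (auto simp: inner pik)
  finally have sg: "(\<Sum>\<sigma>\<in>?E. gg K n w \<sigma> \<pi>) = (1 + (real K - 1) * w) ^ (K*n)" by simp
  have "(\<Sum>\<sigma>\<in>?E. hh K n w \<sigma> \<pi>) = (\<Sum>\<sigma>\<in>?E. gg K n w \<sigma> \<pi> - (if \<sigma> = sigpi K n \<pi> then gg K n w \<sigma> \<pi> else 0))"
    unfolding hh_def by (rule sum.cong) auto
  also have "\<dots> = (\<Sum>\<sigma>\<in>?E. gg K n w \<sigma> \<pi>) - gg K n w (sigpi K n \<pi>) \<pi>"
    using spE by (simp add: sum_subtractf sum.delta finite_PiE)
  finally show ?thesis using sg g1 by simp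
qed

lemma exp_pow_bound:
  fixes r s :: real
  assumes "0 \<le> r" "r \<le> exp (-s)"
  shows "r ^ m \<le> exp (-(s * m))"
proof -
  have "r ^ m \<le> exp (-s) ^ m" using assms by (intro power_mono) auto
  also have "\<dots> = exp (-(s*m))" by (simp add: exp_of_nat_mult[symmetric] mult.commute)
  finally show ?thesis .
qed

lemma sigma_bound:
  fixes \<epsilon> r s w :: real
  assumes n: "0 < n" and eps: "0 < \<epsilon>" "\<epsilon> < 1/2" and sF: "\<sigma> \<in> Fset K n"
    and r0: "0 \<le> r" and r1: "r \<le> exp (-s)" and s0: "0 \<le> s" and w: "w = exp (-(2*s*(1-\<epsilon>)*n))"
  shows "r ^ card (Dset K n \<sigma>) \<le> (\<Sum>\<pi>\<in>Pis K. hh K n w \<sigma> \<pi>) + exp (-(s*(\<epsilon>*n*n/2)))"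
proof -
  have w0: "0 \<le> w" using w by simp
  have hnn: "0 \<le> (\<Sum>\<pi>\<in>Pis K. hh K n w \<sigma> \<pi>)" by (rule sum_nonneg) (use hh_nonneg w0 in auto)
  have bal: "balanced_partition K n \<sigma>" and ns: "\<not> same_partition (K*n) \<sigma> (true_partition n)"
    and sE: "\<sigma> \<in> {..<K*n} \<rightarrow>\<^sub>E {..<K}"
    using sF unfolding Fset_def by auto
  have base: "r ^ card (Dset K n \<sigma>) \<le> exp (-(s * card (Dset K n \<sigma>)))" by (rule exp_pow_bound[OF r0 r1])
  show ?thesis
  proof (cases "\<forall>i<K. \<exists>j<K. (1-\<epsilon>) * n \<le> real (Nc K n \<sigma> i j)")
    case True
    then have "\<forall>i\<in>{..<K}. \<exists>j. j < K \<and> (1-\<epsilon>) * n \<le> real (Nc K n \<sigma> i j)" by auto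
    then obtain f where f: "\<forall>i\<in>{..<K}. f i < K \<and> (1-\<epsilon>) * n \<le> real (Nc K n \<sigma> i (f i))"
      by (metis bchoice)
    define \<pi> where "\<pi> = restrict f {..<K}"
    have piP: "\<pi> \<in> Pis K" unfolding \<pi>_def Pis_def using f by auto
    have pi: "\<forall>i<K. \<pi> i < K" and big: "\<forall>i<K. (1-\<epsilon>) * n \<le> real (Nc K n \<sigma> i (\<pi> i))"
      unfolding \<pi>_def using f by auto
    have inj: "inj_on \<pi> {..<K}" by (rule regime1_inj[OF n eps(2) bal pi big])
    define S where "S = {x. x < K*n \<and> \<sigma> x \<noteq> \<pi> (x div n)}"
    have cD: "2*(1-\<epsilon>)*n * card S \<le> card (Dset K n \<sigma>)"
      unfolding S_def by (rule regime1_bound[OF n bal pi big inj])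
    have "S \<noteq> {}"
    proof
      assume "S = {}"
      then have "\<forall>x<K*n. \<sigma> x = \<pi> (x div n)" unfolding S_def by auto
      then show False using regime1_same[OF inj] ns by blast
    qed
    then obtain x where x: "x \<in> S" by auto
    have ne: "\<sigma> \<noteq> sigpi K n \<pi>"
    proof
      assume "\<sigma> = sigpi K n \<pi>"
      then have "\<sigma> x = \<pi> (x div n)" using x unfolding S_def sigpi_def by auto
      then show False using x unfolding S_def by auto
    qed
    have "s * (2*(1-\<epsilon>)*n * card S) \<le> s * real (card (Dset K n \<sigma>))"
      using s0 cD by (intro mult_left_mono) auto
    then have "exp (-(s * real (card (Dset K n \<sigma>)))) \<le> exp (-(s * (2*(1-\<epsilon>)*n * card S)))" by simp
    then have "r ^ card (Dset K n \<sigma>) \<le> exp (-(s * (2*(1-\<epsilon>)*n * card S)))"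
      using base by linarith
    also have "\<dots> = w ^ card S" unfolding w by (simp add: exp_of_nat_mult[symmetric] algebra_simps)
    also have "\<dots> = hh K n w \<sigma> \<pi>" unfolding hh_def gg_card S_def using ne by simp
    also have "\<dots> \<le> (\<Sum>\<pi>\<in>Pis K. hh K n w \<sigma> \<pi>)"
      by (rule member_le_sum[OF piP]) (auto simp: Pis_def hh_nonneg w0 finite_PiE)
    finally have "r ^ card (Dset K n \<sigma>) \<le> (\<Sum>\<pi>\<in>Pis K. hh K n w \<sigma> \<pi>)" .
    moreover have "0 \<le> exp (-(s*(\<epsilon>*n*n/2)))" by simp
    ultimately show ?thesis by linarith
  next
    case False
    then obtain i where i: "i < K" and small: "\<forall>j<K. real (Nc K n \<sigma> i j) < (1-\<epsilon>) * n"
      by (auto simp: not_le)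
    have sig: "\<forall>x<K*n. \<sigma> x < K" using bal unfolding balanced_partition_def by auto
    have "\<epsilon> * n * n \<le> 2 * real (card (Dset K n \<sigma>))" by (rule regime2[OF n i sig small])
    then have "s*(\<epsilon>*n*n/2) \<le> s * real (card (Dset K n \<sigma>))"
      using s0 by (intro mult_left_mono) auto
    then have "exp (-(s * real (card (Dset K n \<sigma>)))) \<le> exp (-(s*(\<epsilon>*n*n/2)))" by simp
    then have "r ^ card (Dset K n \<sigma>) \<le> exp (-(s*(\<epsilon>*n*n/2)))"
      using base by linarith
    then show ?thesis using hnn by simp
  qed
qed

lemma total_bound:
  fixes \<epsilon> r s w :: real
  assumes n: "0 < n" and eps: "0 < \<epsilon>" "\<epsilon> < 1/2"
    and r0: "0 \<le> r" and r1: "r \<le> exp (-s)" and s0: "0 \<le> s" and w: "w = exp (-(2*s*(1-\<epsilon>)*n))"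
  shows "(\<Sum>\<sigma>\<in>Fset K n. r ^ card (Dset K n \<sigma>))
    \<le> real K ^ K * ((1 + (real K - 1) * w) ^ (K*n) - 1) + real K ^ (K*n) * exp (-(s*(\<epsilon>*n*n/2)))"
proof -
  let ?E = "{..<K*n} \<rightarrow>\<^sub>E {..<K}"
  let ?X = "exp (-(s*(\<epsilon>*n*n/2)))"
  have w0: "0 \<le> w" using w by simp
  have fE: "finite ?E" by (simp add: finite_PiE)
  have sub: "Fset K n \<subseteq> ?E" unfolding Fset_def by blast
  have nn: "0 \<le> (\<Sum>\<pi>\<in>Pis K. hh K n w \<sigma> \<pi>) + ?X" for \<sigma>
    by (intro add_nonneg_nonneg sum_nonneg) (auto simp: hh_nonneg w0)
  have "(\<Sum>\<sigma>\<in>Fset K n. r ^ card (Dset K n \<sigma>)) \<le> (\<Sum>\<sigma>\<in>Fset K n. (\<Sum>\<pi>\<in>Pis K. hh K n w \<sigma> \<pi>) + ?X)"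
    by (rule sum_mono) (rule sigma_bound[OF n eps _ r0 r1 s0 w])
  also have "\<dots> \<le> (\<Sum>\<sigma>\<in>?E. (\<Sum>\<pi>\<in>Pis K. hh K n w \<sigma> \<pi>) + ?X)"
    by (rule sum_mono2[OF fE sub nn])
  also have "\<dots> = (\<Sum>\<sigma>\<in>?E. \<Sum>\<pi>\<in>Pis K. hh K n w \<sigma> \<pi>) + card ?E * ?X"
    by (simp add: sum.distrib)
  also have "(\<Sum>\<sigma>\<in>?E. \<Sum>\<pi>\<in>Pis K. hh K n w \<sigma> \<pi>) = (\<Sum>\<pi>\<in>Pis K. \<Sum>\<sigma>\<in>?E. hh K n w \<sigma> \<pi>)"
    by (rule sum.swap)
  also have "(\<Sum>\<pi>\<in>Pis K. \<Sum>\<sigma>\<in>?E. hh K n w \<sigma> \<pi>) = (\<Sum>\<pi>\<in>Pis K. (1 + (real K - 1) * w) ^ (K*n) - 1)"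
    by (rule sum.cong) (auto simp: sum_hh)
  also have "\<dots> = real K ^ K * ((1 + (real K - 1) * w) ^ (K*n) - 1)"
    by (simp add: Pis_def card_PiE)
  also have "card ?E = K ^ (K*n)" by (simp add: card_PiE)
  finally show ?thesis by simp
qed

theorem theorem3:
  fixes K L :: nat and a b :: "nat \<Rightarrow> real"
  assumes "K \<ge> 2" and "L \<ge> 1"
    and "\<forall>l\<in>{1..L}. a l \<ge> 0 \<and> b l \<ge> 0"
    and "(\<Sum>l=1..L. (sqrt (a l) - sqrt (b l))^2) > 1"
  shows "(\<lambda>n. mle_success_prob K L a b n) \<longlonglongrightarrow> 1"
proof -
  note K2 = assms(1) and nn = assms(3)
  define D where "D = (\<Sum>l=1..L. (sqrt (a l) - sqrt (b l))^2)"
  have D1: "D > 1" using assms(4) unfolding D_def .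
  define \<epsilon> :: real where "\<epsilon> = min (1/4) ((D-1)/(2*D))"
  have eps: "0 < \<epsilon>" "\<epsilon> < 1/2" unfolding \<epsilon>_def using D1 by auto
  define c where "c = D * (1 - \<epsilon>)"
  have "D * \<epsilon> \<le> D * ((D-1)/(2*D))" unfolding \<epsilon>_def using D1 by (intro mult_left_mono) auto
  also have "\<dots> = (D-1)/2" using D1 by (simp add: field_simps)
  finally have c1: "c > 1" unfolding c_def using D1 by (simp add: algebra_simps)
  define u where "u = (\<Sum>l=1..L. a l)"
  define v where "v = (\<Sum>l=1..L. b l)"
  define s :: "nat \<Rightarrow> real" where "s n = ln n / n * D / 2" for n
  define w :: "nat \<Rightarrow> real" where "w n = exp (-(2 * s n * (1-\<epsilon>) * n))" for n
  define R1 where "R1 n = real K ^ K * ((1 + (real K - 1) * w n) ^ (K*n) - 1)" for n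
  define R2 where "R2 n = real K ^ (K*n) * exp (-(s n*(\<epsilon>*n*n/2)))" for n
  define fail where "fail n = (\<Sum>G\<in>{G\<in>wsbm_colorings L (K*n). \<not> mle_exact_recovery K L a b n G}.
      wsbm_likelihood K L a b n (true_partition n) G)" for n
  have t0: "((\<lambda>n::nat. ln (real n) / real n) \<longlongrightarrow> 0) sequentially" by real_asymp
  have ev: "eventually (\<lambda>n. 2 \<le> n \<and> u * (ln n / n) \<le> 1 \<and> v * (ln n / n) \<le> 1) sequentially"
  proof -
    have "eventually (\<lambda>n. u * (ln (real n) / real n) < 1) sequentially"
      using tendsto_mult_left[OF t0, of u] by (auto intro: order_tendstoD)
    moreover have "eventually (\<lambda>n. v * (ln (real n) / real n) < 1) sequentially"
      using tendsto_mult_left[OF t0, of v] by (auto intro: order_tendstoD)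
    moreover have "eventually (\<lambda>n. 2 \<le> n) sequentially" by (rule eventually_ge_at_top)
    ultimately show ?thesis by eventually_elim auto
  qed
  have bound: "eventually (\<lambda>n. 0 \<le> fail n \<and> fail n \<le> R1 n + R2 n) sequentially"
    using ev
  proof eventually_elim
    case (elim n)
    then have n2: "2 \<le> n" and hu: "u * (ln n / n) \<le> 1" and hv: "v * (ln n / n) \<le> 1" by auto
    have n0: "0 < n" "1 \<le> n" using n2 by auto
    have lnn: "0 \<le> ln (real n) / real n" using n2 by simp
    have dn: "dnn L a b n" unfolding dnn_def
    proof (intro allI impI conjI)
      fix l assume l: "l \<le> L"
      show "0 \<le> wsbm_dist L a n l"
      proof (cases "l = 0")
        case True then show ?thesis using hu unfolding wsbm_dist_def u_def by (simp add: algebra_simps)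
      next
        case False
        then have "0 \<le> a l" using l nn by auto
        then have "0 \<le> a l * (ln (real n) / real n)" using lnn by (rule mult_nonneg_nonneg)
        then show ?thesis using False unfolding wsbm_dist_def by simp
      qed
      show "0 \<le> wsbm_dist L b n l"
      proof (cases "l = 0")
        case True then show ?thesis using hv unfolding wsbm_dist_def v_def by (simp add: algebra_simps)
      next
        case False
        then have "0 \<le> b l" using l nn by auto
        then have "0 \<le> b l * (ln (real n) / real n)" using lnn by (rule mult_nonneg_nonneg)
        then show ?thesis using False unfolding wsbm_dist_def by simp
      qed
    qed
    have rle: "rho L a b n \<le> 1 - (ln n / n) * D / 2" and r0: "0 \<le> rho L a b n"
      using rho_le[OF nn n0(2)] hu hv unfolding D_def u_def v_def by (auto simp: mult.commute)
    have "1 - (ln n / n) * D / 2 \<le> exp (-s n)" using exp_ge_add_one_self[of "-s n"] unfolding s_def by simp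
    then have r1: "rho L a b n \<le> exp (-s n)" using rle by linarith
    have s0: "0 \<le> s n" unfolding s_def
      by (intro divide_nonneg_nonneg mult_nonneg_nonneg lnn) (use D1 in auto)
    have "fail n \<le> (\<Sum>\<sigma>\<in>Fset K n. \<Sum>G\<in>{G\<in>wsbm_colorings L (K*n). wsbm_likelihood K L a b n (true_partition n) G \<le> wsbm_likelihood K L a b n \<sigma> G}.
            wsbm_likelihood K L a b n (true_partition n) G)"
      unfolding fail_def by (rule union_bound[OF dn])
    also have "\<dots> \<le> (\<Sum>\<sigma>\<in>Fset K n. rho L a b n ^ card (Dset K n \<sigma>))"
      by (rule sum_mono) (rule keybound[OF dn])
    also have "\<dots> \<le> R1 n + R2 n"
      unfolding R1_def R2_def by (rule total_bound[OF n0(1) eps r0 r1 s0 w_def])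
    finally have "fail n \<le> R1 n + R2 n" .
    moreover have "0 \<le> fail n" unfolding fail_def by (rule sum_nonneg) (use lik_nonneg[OF dn] in blast)
    ultimately show ?case by simp
  qed
  have K0: "0 < real K" "1 \<le> real K" using K2 by auto
  have wn: "w n = exp (-(c * ln (real n)))" if "0 < n" for n
  proof -
    have "2 * s n * (1-\<epsilon>) * n = c * ln (real n)" unfolding s_def c_def using that by (simp add: field_simps)
    then show ?thesis unfolding w_def by simp
  qed
  have w0: "0 \<le> w n" for n unfolding w_def by simp
  have y0: "(\<lambda>n. real n * w n) \<longlonglongrightarrow> 0"
  proof -
    have "((\<lambda>n::nat. real n * exp (- (c * ln (real n)))) \<longlongrightarrow> 0) sequentially" using c1 by real_asymp
    moreover have "eventually (\<lambda>n. real n * exp (- (c * ln (real n))) = real n * w n) sequentially"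
      using eventually_gt_at_top[of 0] by (rule eventually_mono) (simp add: wn)
    ultimately show ?thesis by (rule Lim_transform_eventually)
  qed
  have R1lim: "R1 \<longlonglongrightarrow> 0"
  proof (rule tendsto_sandwich[of "\<lambda>_. 0" _ _ "\<lambda>n. real K ^ K * (exp (real K * (real K - 1) * (real n * w n)) - 1)"])
    show "eventually (\<lambda>n. 0 \<le> R1 n) sequentially"
    proof (rule always_eventually, rule allI)
      fix n
      have "1 \<le> 1 + (real K - 1) * w n" using K0 w0[of n] by simp
      then have "1 \<le> (1 + (real K - 1) * w n) ^ (K*n)" by (rule one_le_power)
      then show "0 \<le> R1 n" unfolding R1_def by simp
    qed
    show "eventually (\<lambda>n. R1 n \<le> real K ^ K * (exp (real K * (real K - 1) * (real n * w n)) - 1)) sequentially"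
    proof (rule always_eventually, rule allI)
      fix n
      have "(1 + (real K - 1) * w n) ^ (K*n) \<le> exp ((real K - 1) * w n) ^ (K*n)"
        by (rule power_mono) (use K0 w0[of n] in auto)
      also have "\<dots> = exp (real (K*n) * ((real K - 1) * w n))" by (rule exp_of_nat_mult[symmetric])
      also have "real (K*n) * ((real K - 1) * w n) = real K * (real K - 1) * (real n * w n)" by simp
      finally show "R1 n \<le> real K ^ K * (exp (real K * (real K - 1) * (real n * w n)) - 1)"
        unfolding R1_def using K0 by (intro mult_left_mono) auto
    qed
    show "(\<lambda>_. 0) \<longlonglongrightarrow> (0::real)" by simp
    have "(\<lambda>n. real K ^ K * (exp (real K * (real K - 1) * (real n * w n)) - 1)) \<longlonglongrightarrow> real K ^ K * (exp (real K * (real K - 1) * 0) - 1)"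
      by (intro tendsto_intros y0)
    then show "(\<lambda>n. real K ^ K * (exp (real K * (real K - 1) * (real n * w n)) - 1)) \<longlonglongrightarrow> 0" by simp
  qed
  have R2lim: "R2 \<longlonglongrightarrow> 0"
  proof -
    define A where "A = real K * ln (real K)"
    define B where "B = D * \<epsilon> / 4"
    have B0: "B > 0" unfolding B_def using D1 eps by simp
    have "((\<lambda>n::nat. exp (A * real n - B * real n * ln (real n))) \<longlongrightarrow> 0) sequentially" using B0 by real_asymp
    moreover have "eventually (\<lambda>n. exp (A * real n - B * real n * ln (real n)) = R2 n) sequentially"
      using eventually_gt_at_top[of 0]
    proof (rule eventually_mono)
      fix n :: nat assume n: "0 < n"
      have "real K ^ (K*n) = exp (ln (real K)) ^ (K*n)" using K0 by simp
      also have "\<dots> = exp (real (K*n) * ln (real K))" by (rule exp_of_nat_mult[symmetric])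
      finally have kk: "real K ^ (K*n) = exp (real (K*n) * ln (real K))" .
      have "R2 n = exp (real (K*n) * ln (real K)) * exp (-(s n*(\<epsilon>*n*n/2)))"
        unfolding R2_def kk ..
      also have "\<dots> = exp (real (K*n) * ln (real K) + (-(s n*(\<epsilon>*n*n/2))))"
        by (rule exp_add[symmetric])
      also have "real (K*n) * ln (real K) + (-(s n*(\<epsilon>*n*n/2))) = A * real n - B * real n * ln (real n)"
        unfolding A_def B_def s_def using n by (simp add: field_simps)
      finally show "exp (A * real n - B * real n * ln (real n)) = R2 n" by simp
    qed
    ultimately show ?thesis by (rule Lim_transform_eventually)
  qed
  have "fail \<longlonglongrightarrow> 0"
  proof (rule tendsto_sandwich[of "\<lambda>_. 0" _ _ "\<lambda>n. R1 n + R2 n"])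
    show "eventually (\<lambda>n. 0 \<le> fail n) sequentially" using bound by (rule eventually_mono) auto
    show "eventually (\<lambda>n. fail n \<le> R1 n + R2 n) sequentially" using bound by (rule eventually_mono) auto
    show "(\<lambda>_. 0) \<longlonglongrightarrow> (0::real)" by simp
    show "(\<lambda>n. R1 n + R2 n) \<longlonglongrightarrow> 0" using tendsto_add[OF R1lim R2lim] by simp
  qed
  then have "(\<lambda>n. 1 - fail n) \<longlonglongrightarrow> 1 - 0" by (intro tendsto_intros)
  then show ?thesis unfolding fail_def success_eq[symmetric] by simp
qed

end
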